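(* Let $\omega\in L^1[0,1]$ be real-valued with $\omega\ge 0$ a.e. on $[0,1]$ and $\int_0^1\omega(x)\,dx>0$. Fix $c_1\ge 0$ and $c_2\in\mathbb{R}$, not both zero. For each $\lambda\ge 0$ let $\theta(\cdot;\lambda)$ be the absolutely continuous solution on $[0,1]$ of $$\theta'(x;\lambda)=\sqrt{\lambda}\big(\cos^2\theta(x;\lambda)+\omega(x)\sin^2\theta(x;\lambda)\big)\quad\text{a.e. on }[0,1],$$ with initial value $\theta(0;\lambda)=\arctan\frac{\sqrt{\lambda}c_1}{c_2}\in[0,\pi)$. Then $\lim_{\lambda\to+\infty}\theta(1;\lambda)=+\infty$, and for every fixed $\lambda\ge 0$ the function $x\mapsto\theta(x;\lambda)$ is nondecreasing on $[0,1]$.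
   Context: Here $\theta(0;\lambda)$ is the angle in $[0,\pi)$ whose tangent is $\sqrt{\lambda}c_1/c_2$ (equal to $\pi/2$ when $c_2=0$); $\theta$ is the (elliptic) Prüfer angle of the solution of $-y''=\lambda\omega y$, $y(0)=c_1$, $y'(0)=c_2$. *)

theory Defs
  imports "HOL-Analysis.Analysis"
begin

definition abs_continuous_on :: "real \<Rightarrow> real \<Rightarrow> (real \<Rightarrow> real) \<Rightarrow> bool" where
  "abs_continuous_on a b f \<longleftrightarrow>
     (\<forall>\<epsilon>>0. \<exists>\<delta>>0. \<forall>(n::nat) (l::nat \<Rightarrow> real) (r::nat \<Rightarrow> real).
        (\<forall>i<n. a \<le> l i \<and> l i \<le> r i \<and> r i \<le> b) \<and>
        (\<forall>i<n. \<forall>j<n. i \<noteq> j \<longrightarrow> {l i<..<r i} \<inter> {l j<..<r j} = {}) \<and>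
        (\<Sum>i<n. r i - l i) < \<delta>
        \<longrightarrow> (\<Sum>i<n. \<bar>f (r i) - f (l i)\<bar>) < \<epsilon>)"

definition prufer_init :: "real \<Rightarrow> real \<Rightarrow> real \<Rightarrow> real" where
  "prufer_init c1 c2 lam =
     (if c2 = 0 then pi / 2
      else if arctan (sqrt lam * c1 / c2) \<ge> 0 then arctan (sqrt lam * c1 / c2)
      else arctan (sqrt lam * c1 / c2) + pi)"

end

theory Submission
  imports Defs
begin

definition acP :: "real \<Rightarrow> real \<Rightarrow> (real \<Rightarrow> real) \<Rightarrow> real \<Rightarrow> real \<Rightarrow> bool" where
  "acP a b f e d \<longleftrightarrow> (\<forall>(n::nat) (l::nat \<Rightarrow> real) (r::nat \<Rightarrow> real).
        (\<forall>i<n. a \<le> l i \<and> l i \<le> r i \<and> r i \<le> b) \<and>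
        (\<forall>i<n. \<forall>j<n. i \<noteq> j \<longrightarrow> {l i<..<r i} \<inter> {l j<..<r j} = {}) \<and>
        (\<Sum>i<n. r i - l i) < d
        \<longrightarrow> (\<Sum>i<n. \<bar>f (r i) - f (l i)\<bar>) < e)"

definition acdelta :: "real \<Rightarrow> real \<Rightarrow> (real \<Rightarrow> real) \<Rightarrow> real \<Rightarrow> real" where
  "acdelta a b f e = (SOME d. d > 0 \<and> acP a b f e d)"

lemma acdelta:
  assumes "abs_continuous_on a b f" "e > 0"
  shows "acdelta a b f e > 0 \<and> acP a b f e (acdelta a b f e)"
proof -
  have ex: "\<exists>d>0. acP a b f e d"
    using assms(1)[unfolded abs_continuous_on_def, rule_format, OF assms(2)] unfolding acP_def .
  show ?thesis unfolding acdelta_def by (rule someI_ex) (use ex in simp)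
qed

lemma acdelta_pos: "abs_continuous_on a b f \<Longrightarrow> e > 0 \<Longrightarrow> acdelta a b f e > 0"
  using acdelta by blast

lemma acdelta_H:
  fixes n :: nat and l r :: "nat \<Rightarrow> real"
  assumes "abs_continuous_on a b f" "e > 0"
    and A: "\<forall>i<n. a \<le> l i \<and> l i \<le> r i \<and> r i \<le> b"
    and B: "\<forall>i<n. \<forall>j<n. i \<noteq> j \<longrightarrow> {l i<..<r i} \<inter> {l j<..<r j} = {}"
    and C: "(\<Sum>i<n. r i - l i) < acdelta a b f e"
  shows "(\<Sum>i<n. \<bar>f (r i) - f (l i)\<bar>) < e"
  by (rule mp[OF spec[OF spec[OF spec[OF acdelta[OF assms(1,2), THEN conjunct2, unfolded acP_def], of n], of l], of r] conjI[OF A conjI[OF B C]]])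

lemma ac_continuous:
  fixes f :: "real \<Rightarrow> real"
  assumes ac: "abs_continuous_on a b f"
  shows "continuous_on {a..b} f"
  unfolding continuous_on_iff
proof (intro ballI allI impI)
  fix x e :: real assume x: "x \<in> {a..b}" and e: "e > 0"
  show "\<exists>d>0. \<forall>x'\<in>{a..b}. dist x' x < d \<longrightarrow> dist (f x') (f x) < e"
  proof (intro exI conjI ballI impI)
    show "acdelta a b f e > 0" by (rule acdelta_pos[OF ac e])
    fix y assume y: "y \<in> {a..b}" "dist y x < acdelta a b f e"
    have "(\<Sum>i<(1::nat). \<bar>f ((\<lambda>_. max x y) i) - f ((\<lambda>_. min x y) i)\<bar>) < e"
      by (rule acdelta_H[OF ac e]) (use x y in \<open>auto simp: dist_real_def\<close>)
    then show "dist (f y) (f x) < e"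
      by (cases "x \<le> y") (auto simp: dist_real_def max_def min_def abs_minus_commute)
  qed
qed

lemma ac_add_linear:
  fixes f :: "real \<Rightarrow> real"
  assumes ac: "abs_continuous_on a b f"
  shows "abs_continuous_on a b (\<lambda>x. f x + c * x)"
  unfolding abs_continuous_on_def
proof (intro allI impI)
  fix e :: real assume e: "e > 0"
  have e2: "e/2 > 0" using e by simp
  define d where "d = acdelta a b f (e/2)"
  have d: "d > 0" unfolding d_def by (rule acdelta_pos[OF ac e2])
  define d' where "d' = min d (e / (2 * (\<bar>c\<bar> + 1)))"
  have d': "d' > 0" using d e by (simp add: d'_def)
  show "\<exists>\<delta>>0. \<forall>(n::nat) (l::nat \<Rightarrow> real) (r::nat \<Rightarrow> real). (\<forall>i<n. a \<le> l i \<and> l i \<le> r i \<and> r i \<le> b) \<and>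
        (\<forall>i<n. \<forall>j<n. i \<noteq> j \<longrightarrow> {l i<..<r i} \<inter> {l j<..<r j} = {}) \<and>
        (\<Sum>i<n. r i - l i) < \<delta> \<longrightarrow> (\<Sum>i<n. \<bar>f (r i) + c * r i - (f (l i) + c * l i)\<bar>) < e"
  proof (intro exI conjI allI impI)
    fix n :: nat and l r :: "nat \<Rightarrow> real"
    assume A: "(\<forall>i<n. a \<le> l i \<and> l i \<le> r i \<and> r i \<le> b) \<and>
        (\<forall>i<n. \<forall>j<n. i \<noteq> j \<longrightarrow> {l i<..<r i} \<inter> {l j<..<r j} = {}) \<and>
        (\<Sum>i<n. r i - l i) < d'"
    have C: "(\<Sum>i<n. r i - l i) < acdelta a b f (e/2)"
      using A by (simp add: d'_def d_def)
    have 1: "(\<Sum>i<n. \<bar>f (r i) - f (l i)\<bar>) < e/2"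
      using acdelta_H[OF ac e2 _ _ C] A by blast
    have "(\<Sum>i<n. \<bar>f (r i) + c * r i - (f (l i) + c * l i)\<bar>) \<le>
          (\<Sum>i<n. \<bar>f (r i) - f (l i)\<bar> + \<bar>c\<bar> * (r i - l i))"
    proof (rule sum_mono)
      fix i assume "i \<in> {..<n}"
      then have li: "l i \<le> r i" using A by auto
      have "\<bar>f (r i) + c * r i - (f (l i) + c * l i)\<bar> = \<bar>(f (r i) - f (l i)) + c * (r i - l i)\<bar>"
        by (simp add: algebra_simps)
      also have "\<dots> \<le> \<bar>f (r i) - f (l i)\<bar> + \<bar>c * (r i - l i)\<bar>" by (rule abs_triangle_ineq)
      also have "\<bar>c * (r i - l i)\<bar> = \<bar>c\<bar> * (r i - l i)" using li by (simp add: abs_mult)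
      finally show "\<bar>f (r i) + c * r i - (f (l i) + c * l i)\<bar> \<le> \<bar>f (r i) - f (l i)\<bar> + \<bar>c\<bar> * (r i - l i)" .
    qed
    also have "\<dots> = (\<Sum>i<n. \<bar>f (r i) - f (l i)\<bar>) + \<bar>c\<bar> * (\<Sum>i<n. r i - l i)"
      by (simp add: sum.distrib sum_distrib_left)
    also have "\<bar>c\<bar> * (\<Sum>i<n. r i - l i) \<le> \<bar>c\<bar> * (e / (2 * (\<bar>c\<bar> + 1)))"
      using A by (intro mult_left_mono) (auto simp: d'_def)
    also have "\<bar>c\<bar> * (e / (2 * (\<bar>c\<bar> + 1))) \<le> e/2"
      using e by (simp add: field_simps)
    finally show "(\<Sum>i<n. \<bar>f (r i) + c * r i - (f (l i) + c * l i)\<bar>) < e" using 1 by linarith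
  qed (use d' in auto)
qed

lemma ac_negligible_image:
  fixes f :: "real \<Rightarrow> real"
  assumes ac: "abs_continuous_on a b f" and E: "E \<subseteq> {a..b}" "negligible E"
  shows "negligible (f ` E)"
  unfolding negligible_outer_le
proof (intro allI impI)
  fix e :: real assume e: "e > 0"
  have cont: "continuous_on {a..b} f" using ac by (rule ac_continuous)
  define d where "d = acdelta a b f e"
  have d: "d > 0" unfolding d_def by (rule acdelta_pos[OF ac e])
  have Em: "E \<in> lmeasurable" "measure lebesgue E = 0"
    using E negligible_imp_measurable negligible_imp_measure0 by auto
  have "d/2 > 0" using d by simp
  have E': "E \<subseteq> cbox a b" using E by simp
  obtain \<D> where D1: "countable \<D>"
        and D2': "\<And>K. K \<in> \<D> \<Longrightarrow> K \<subseteq> cbox a b \<and> K \<noteq> {} \<and> (\<exists>c d. K = cbox c d)"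
        and D3: "pairwise (\<lambda>A B. interior A \<inter> interior B = {}) \<D>"
        and D4: "E \<subseteq> \<Union>\<D>" and D5: "\<Union>\<D> \<in> lmeasurable"
        and D6': "measure lebesgue (\<Union>\<D>) \<le> measure lebesgue E + d/2"
    by (rule measurable_outer_intervals_bounded[OF Em(1) E' \<open>d/2 > 0\<close>]) blast
  have D2: "K \<subseteq> {a..b} \<and> K \<noteq> {} \<and> (\<exists>c d. K = {c..d})" if "K \<in> \<D>" for K
    using D2'[OF that] by (simp add: cbox_interval)
  have D6: "measure lebesgue (\<Union>\<D>) \<le> d/2" using D6' Em(2) by simp
  note D = D1 D2 D3 D4 D5 D6
  have "\<forall>K\<in>\<D>. \<exists>p. fst p \<in> K \<and> snd p \<in> K \<and> (\<forall>x\<in>K. f (fst p) \<le> f x \<and> f x \<le> f (snd p))"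
  proof
    fix K assume K: "K \<in> \<D>"
    then obtain c d' where Kc: "K = {c..d'}" "K \<noteq> {}" "K \<subseteq> {a..b}" using D(2) by blast
    have cK: "continuous_on K f" using cont Kc continuous_on_subset by blast
    have "compact K" using Kc by simp
    obtain p where "p \<in> K" "\<forall>x\<in>K. f p \<le> f x"
      using continuous_attains_inf[OF \<open>compact K\<close> \<open>K \<noteq> {}\<close> cK] by blast
    moreover obtain q where "q \<in> K" "\<forall>x\<in>K. f x \<le> f q"
      using continuous_attains_sup[OF \<open>compact K\<close> \<open>K \<noteq> {}\<close> cK] by blast
    ultimately show "\<exists>p. fst p \<in> K \<and> snd p \<in> K \<and> (\<forall>x\<in>K. f (fst p) \<le> f x \<and> f x \<le> f (snd p))"
      by (intro exI[of _ "(p,q)"]) auto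
  qed
  then obtain P where P0: "\<forall>K\<in>\<D>. fst (P K) \<in> K \<and> snd (P K) \<in> K \<and>
      (\<forall>x\<in>K. f (fst (P K)) \<le> f x \<and> f x \<le> f (snd (P K)))"
    by (rule bchoice[elim_format]) blast
  note P = bspec[OF P0]
  define lo where "lo K = fst (P K)" for K
  define hi where "hi K = snd (P K)" for K
  have lohi: "lo K \<in> K" "hi K \<in> K" "\<And>x. x \<in> K \<Longrightarrow> f (lo K) \<le> f x \<and> f x \<le> f (hi K)"
    if "K \<in> \<D>" for K using P[OF that] by (auto simp: lo_def hi_def)
  have KmD: "K \<in> lmeasurable" if KD: "K \<in> \<D>" for K
  proof -
    obtain c d' where "K = {c..d'}" using D(2)[OF KD] by blast
    then show ?thesis by simp
  qed
  define I where "I K = {f (lo K) .. f (hi K)}" for K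
  have claim: "(\<Sum>K\<in>F. f (hi K) - f (lo K)) < e" if F: "finite F" "F \<subseteq> \<D>" for F
  proof -
    obtain g where g: "bij_betw g {..<card F} F"
      using ex_bij_betw_nat_finite[OF F(1)] by (auto simp: lessThan_atLeast0)
    define l where "l i = min (lo (g i)) (hi (g i))" for i
    define r where "r i = max (lo (g i)) (hi (g i))" for i
    have gD: "g i \<in> \<D>" if "i < card F" for i using g F that by (auto simp: bij_betw_def)
    have ginj: "g i \<noteq> g j" if "i < card F" "j < card F" "i \<noteq> j" for i j
      using g that by (auto simp: bij_betw_def inj_on_def)
    have lrK: "l i \<in> g i" "r i \<in> g i" if "i < card F" for i
      using lohi[OF gD[OF that]] by (auto simp: l_def r_def min_def max_def)
    have sub: "{l i<..<r i} \<subseteq> interior (g i)" if i: "i < card F" for i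
    proof -
      obtain c d' where "g i = {c..d'}" using D(2)[OF gD[OF i]] by blast
      then show ?thesis using lrK[OF i] by auto
    qed
    have c1: "\<forall>i<card F. a \<le> l i \<and> l i \<le> r i \<and> r i \<le> b"
    proof (intro allI impI)
      fix i assume i: "i < card F"
      have "g i \<subseteq> {a..b}" using D(2)[OF gD[OF i]] by blast
      then have "l i \<in> {a..b}" "r i \<in> {a..b}" using lrK[OF i] by blast+
      moreover have "l i \<le> r i" by (simp add: l_def r_def)
      ultimately show "a \<le> l i \<and> l i \<le> r i \<and> r i \<le> b" by simp
    qed
    have c2: "\<forall>i<card F. \<forall>j<card F. i \<noteq> j \<longrightarrow> {l i<..<r i} \<inter> {l j<..<r j} = {}"
    proof (intro allI impI)
      fix i j assume i: "i < card F" and j: "j < card F" and ij: "i \<noteq> j"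
      have "interior (g i) \<inter> interior (g j) = {}"
        using pairwiseD[OF D(3) gD[OF i] gD[OF j] ginj[OF i j ij]] by simp
      moreover have "{l i<..<r i} \<subseteq> interior (g i)" "{l j<..<r j} \<subseteq> interior (g j)"
        using sub[OF i] sub[OF j] by auto
      ultimately show "{l i<..<r i} \<inter> {l j<..<r j} = {}" by blast
    qed
    have c3: "(\<Sum>i<card F. r i - l i) < d"
    proof -
      have "(\<Sum>i<card F. r i - l i) \<le> (\<Sum>i<card F. measure lebesgue (g i))"
      proof (rule sum_mono)
        fix i assume i: "i \<in> {..<card F}"
        obtain c d' where cd: "g i = {c..d'}" using D(2)[OF gD] i by blast
        have "c \<le> l i" "r i \<le> d'" "l i \<le> r i" using lrK[of i] i cd by (auto simp: l_def r_def)
        then show "r i - l i \<le> measure lebesgue (g i)" using cd by simp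
      qed
      also have "\<dots> = (\<Sum>K\<in>F. measure lebesgue K)"
        using sum.reindex_bij_betw[OF g, of "measure lebesgue"] by simp
      also have "\<dots> = measure lebesgue (\<Union>F)"
      proof (rule measure_negligible_finite_Union[symmetric])
        show "finite F" by fact
        show "S \<in> lmeasurable" if SF: "S \<in> F" for S
        proof -
          obtain c d' where "S = {c..d'}" using D(2) F(2) SF by blast
          then show ?thesis by simp
        qed
        show "pairwise (\<lambda>S T. negligible (S \<inter> T)) F"
          unfolding pairwise_def
        proof (intro ballI impI)
          fix S T assume ST: "S \<in> F" "T \<in> F" "S \<noteq> T"
          obtain c1 d1 where S: "S = {c1..d1}" using D(2) ST F by blast
          obtain c2 d2 where T: "T = {c2..d2}" using D(2) ST F by blast
          have "interior S \<inter> interior T = {}" using D(3) ST F unfolding pairwise_def by blast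
          have "S \<inter> T \<subseteq> {c1, d1, c2, d2}"
          proof
            fix x assume x: "x \<in> S \<inter> T"
            show "x \<in> {c1, d1, c2, d2}"
            proof (rule ccontr)
              assume "x \<notin> {c1, d1, c2, d2}"
              then have "x \<in> interior S \<inter> interior T" using x S T by auto
              with \<open>interior S \<inter> interior T = {}\<close> show False by blast
            qed
          qed
          then show "negligible (S \<inter> T)" by (rule negligible_subset[rotated]) auto
        qed
      qed
      also have "\<dots> \<le> measure lebesgue (\<Union>\<D>)"
        using F D(5) KmD by (intro measure_mono_fmeasurable) (auto intro!: sets.finite_Union fmeasurableD)
      also have "\<dots> < d" using D(6) d by simp
      finally show ?thesis .
    qed
    have "(\<Sum>i<card F. \<bar>f (r i) - f (l i)\<bar>) < e" by (rule acdelta_H[OF ac e c1 c2 c3[unfolded d_def]])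
    moreover have "(\<Sum>i<card F. \<bar>f (r i) - f (l i)\<bar>) = (\<Sum>i<card F. f (hi (g i)) - f (lo (g i)))"
    proof (rule sum.cong)
      fix i assume i: "i \<in> {..<card F}"
      have "f (lo (g i)) \<le> f (hi (g i))" using lohi[OF gD] i by auto
      then show "\<bar>f (r i) - f (l i)\<bar> = f (hi (g i)) - f (lo (g i))"
        by (auto simp: l_def r_def min_def max_def)
    qed simp
    moreover have "(\<Sum>i<card F. f (hi (g i)) - f (lo (g i))) = (\<Sum>K\<in>F. f (hi K) - f (lo K))"
      using sum.reindex_bij_betw[OF g, of "\<lambda>K. f (hi K) - f (lo K)"] by simp
    ultimately show ?thesis by simp
  qed
  show "\<exists>T. f ` E \<subseteq> T \<and> T \<in> lmeasurable \<and> measure lebesgue T \<le> e"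
  proof (cases "\<D> = {}")
    case True
    then show ?thesis using D(4) e by (intro exI[of _ "{}"]) auto
  next
    case False
    define Dn where "Dn = from_nat_into \<D>"
    have rD: "range Dn = \<D>" using False D(1) by (simp add: Dn_def)
    define S where "S n = (\<Union>K\<in>Dn ` {..n}. I K)" for n
    have Sm: "S n \<in> lmeasurable" for n unfolding S_def I_def by (intro fmeasurable.finite_UN) auto
    have Sle: "measure lebesgue (S n) \<le> e" for n
    proof -
      have "measure lebesgue (S n) \<le> (\<Sum>K\<in>Dn ` {..n}. measure lebesgue (I K))"
        unfolding S_def by (rule measure_UNION_le) (auto simp: I_def)
      also have "\<dots> = (\<Sum>K\<in>Dn ` {..n}. f (hi K) - f (lo K))"
      proof (rule sum.cong)
        fix K assume "K \<in> Dn ` {..n}"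
        then have "K \<in> \<D>" using rD by auto
        then have "f (lo K) \<le> f (hi K)" using lohi by blast
        then show "measure lebesgue (I K) = f (hi K) - f (lo K)" by (simp add: I_def)
      qed simp
      also have "\<dots> < e" using rD by (intro claim) auto
      finally show ?thesis by simp
    qed
    have mono: "S n \<subseteq> S (Suc n)" for n unfolding S_def by (auto simp: atMost_Suc)
    have U: "(\<Union>n. S n) = (\<Union>K\<in>\<D>. I K)" unfolding S_def using rD by auto
    have "f ` E \<subseteq> (\<Union>K\<in>\<D>. I K)"
    proof
      fix y assume "y \<in> f ` E"
      then obtain x where x: "x \<in> E" "y = f x" by auto
      then obtain K where "K \<in> \<D>" "x \<in> K" using D(4) by auto
      then have "y \<in> I K" using lohi(3)[of K x] x by (simp add: I_def)
      then show "y \<in> (\<Union>K\<in>\<D>. I K)" using \<open>K \<in> \<D>\<close> by blast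
    qed
    moreover have "(\<Union>n. S n) \<in> lmeasurable" by (rule measurable_nested_Union[of S e, OF Sm Sle mono])
    moreover have "measure lebesgue (\<Union>n. S n) \<le> e"
      using measure_nested_Union[of S e, OF Sm Sle mono] Sle by (intro LIMSEQ_le_const2) auto
    ultimately show ?thesis using U by (intro exI[of _ "\<Union>n. S n"]) auto
  qed
qed

lemma ac_mono:
  fixes f D :: "real \<Rightarrow> real"
  assumes ac: "abs_continuous_on a b f"
    and N: "negligible N"
    and der: "\<And>x. x \<in> {a..b} - N \<Longrightarrow> (f has_real_derivative D x) (at x within {a..b})"
    and Dnn: "\<And>x. x \<in> {a..b} - N \<Longrightarrow> D x \<ge> 0"
  shows "mono_on {a..b} f"
proof (rule mono_onI, rule ccontr)
  fix c d assume c: "c \<in> {a..b}" and d: "d \<in> {a..b}" and cd: "c \<le> d" and "\<not> f c \<le> f d"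
  then have lt: "f d < f c" by simp
  have "c \<noteq> d" using lt by auto
  then have cd': "c < d" using cd by simp
  define \<epsilon> where "\<epsilon> = (f c - f d) / (2 * (d - c))"
  have \<epsilon>: "\<epsilon> > 0" unfolding \<epsilon>_def using lt cd' by simp
  define g where "g x = f x + \<epsilon> * x" for x
  have acg: "abs_continuous_on a b g" unfolding g_def by (rule ac_add_linear[OF ac])
  have contg: "continuous_on {a..b} g" by (rule ac_continuous[OF acg])
  have e2: "\<epsilon> * (d - c) = (f c - f d) / 2" unfolding \<epsilon>_def using cd' by (simp add: field_simps)
  have gdiff: "g c - g d = (f c - f d) - \<epsilon> * (d - c)" by (simp add: g_def algebra_simps)
  have gcd: "g d < g c"
  proof -
    have "g c - g d = (f c - f d) / 2" using gdiff e2 by (simp add: field_simps)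
    moreover have "(f c - f d) / 2 > 0" using lt by simp
    ultimately show ?thesis by (smt (verit))
  qed
  have negl: "negligible (g ` (N \<inter> {a..b}))"
    by (rule ac_negligible_image[OF acg]) (auto intro: negligible_subset[OF N])
  have "\<not> negligible {g d<..<g c}"
    using negligible_interval(2)[of "g d" "g c"] gcd by simp
  then obtain y where y: "y \<in> {g d<..<g c}" "y \<notin> g ` (N \<inter> {a..b})"
    using negligible_subset[OF negl] by blast
  define T where "T = {c..d} \<inter> g -` {y..}"
  have cdab: "{c..d} \<subseteq> {a..b}" using c d by auto
  have contcd: "continuous_on {c..d} g" using contg cdab continuous_on_subset by blast
  have Tclosed: "closed T" unfolding T_def by (rule continuous_closed_preimage[OF contcd]) auto
  have cT: "c \<in> T" using y cd by (simp add: T_def)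
  have Tbdd: "bdd_above T" unfolding T_def by (rule bdd_aboveI[of _ d]) auto
  define x where "x = Sup T"
  have xT: "x \<in> T" unfolding x_def using closed_contains_Sup[OF _ Tbdd Tclosed] cT by blast
  have xcd: "c \<le> x" "x \<le> d" and gx: "y \<le> g x" using xT by (auto simp: T_def)
  have ub: "t \<le> x" if "t \<in> T" for t unfolding x_def by (rule cSup_upper[OF that Tbdd])
  have xd: "x < d" using xcd gx y(1) by (cases "x = d") auto
  have gxy: "g x = y"
  proof (rule ccontr)
    assume "g x \<noteq> y"
    then have "y < g x" using gx by simp
    have "continuous_on {x..d} g" using contcd xcd continuous_on_subset by (metis atLeastatMost_subset_iff order_refl)
    then obtain t where t: "x \<le> t" "t \<le> d" "g t = y"
      using IVT2'[of g d y x] y(1) \<open>y < g x\<close> xd by auto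
    then have "t \<in> T" using xcd by (simp add: T_def)
    then have "t \<le> x" by (rule ub)
    then have "t = x" using t by simp
    then show False using t \<open>g x \<noteq> y\<close> by simp
  qed
  have xab: "x \<in> {a..b}" using xcd cdab by auto
  have xN: "x \<notin> N"
  proof
    assume "x \<in> N"
    then have "y \<in> g ` (N \<inter> {a..b})" using xab gxy by (metis IntI imageI)
    then show False using y(2) by simp
  qed
  have derx: "(f has_real_derivative D x) (at x within {a..b})" and Dx: "D x \<ge> 0"
    using der[of x] Dnn[of x] xab xN by auto
  have "(g has_real_derivative D x + \<epsilon>) (at x within {a..b})"
    unfolding g_def using derx by (auto intro!: derivative_eq_intros)
  moreover have "D x + \<epsilon> > 0" using Dx \<epsilon> by simp
  ultimately obtain \<delta> where \<delta>: "\<delta> > 0" and inc: "\<And>h. h > 0 \<Longrightarrow> x + h \<in> {a..b} \<Longrightarrow> h < \<delta> \<Longrightarrow> g x < g (x + h)"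
    using has_real_derivative_pos_inc_right by blast
  define h where "h = min (\<delta>/2) (d - x)"
  have h: "h > 0" "h < \<delta>" "x + h \<le> d" using \<delta> xd by (auto simp: h_def)
  then have "x + h \<in> {a..b}" using xcd cdab by auto
  then have "g x < g (x + h)" using inc h by blast
  then have "x + h \<in> T" using gxy h xcd by (simp add: T_def)
  then have "x + h \<le> x" by (rule ub)
  then show False using h by simp
qed

lemma key_ineq:
  fixes w t :: real
  assumes "0 \<le> w"
  shows "min 1 w \<le> (cos t)\<^sup>2 + w * (sin t)\<^sup>2"
proof -
  have s: "(cos t)\<^sup>2 + (sin t)\<^sup>2 = 1" by simp
  have "min 1 w * (cos t)\<^sup>2 \<le> 1 * (cos t)\<^sup>2" by (intro mult_right_mono) auto
  moreover have "min 1 w * (sin t)\<^sup>2 \<le> w * (sin t)\<^sup>2" by (intro mult_right_mono) auto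
  moreover have "min 1 w = min 1 w * (cos t)\<^sup>2 + min 1 w * (sin t)\<^sup>2"
    using s by (metis distrib_left mult.right_neutral)
  ultimately show ?thesis by linarith
qed

lemma prufer_init_nonneg: "prufer_init c1 c2 lam \<ge> 0"
proof -
  have "arctan y + pi > 0" for y
    using arctan_bounded[of y] by simp
  then show ?thesis unfolding prufer_init_def
    by (auto simp: less_imp_le)
qed

theorem lemma3p1:
  fixes \<omega> :: "real \<Rightarrow> real" and c1 c2 :: real
    and \<theta> :: "real \<Rightarrow> real \<Rightarrow> real"  (* \<theta> lam x = \<theta>(x;lam) *)
  assumes om_int: "set_integrable lborel {0..1} \<omega>"
    and om_nonneg: "AE x in lborel. x \<in> {0..1} \<longrightarrow> \<omega> x \<ge> 0"
    and om_pos: "(LBINT x:{0..1}. \<omega> x) > 0"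
    and c1: "c1 \<ge> 0"
    and c12: "c1 \<noteq> 0 \<or> c2 \<noteq> 0"
    and ac: "\<forall>lam\<ge>0. abs_continuous_on 0 1 (\<theta> lam)"
    and ode: "\<forall>lam\<ge>0. AE x in lborel. x \<in> {0..1} \<longrightarrow>
        (\<theta> lam has_real_derivative
           sqrt lam * ((cos (\<theta> lam x))\<^sup>2 + \<omega> x * (sin (\<theta> lam x))\<^sup>2)) (at x within {0..1})"
    and init: "\<forall>lam\<ge>0. \<theta> lam 0 = prufer_init c1 c2 lam"
  shows "filterlim (\<lambda>lam. \<theta> lam 1) at_top at_top \<and> (\<forall>lam\<ge>0. mono_on {0..1} (\<theta> lam))"
proof -
  define \<omega>i where "\<omega>i x = indicator {0..1} x * \<omega> x" for x :: real
  have \<omega>i_int: "integrable lborel \<omega>i"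
    using om_int unfolding set_integrable_def \<omega>i_def by simp
  have \<omega>i_meas[measurable]: "\<omega>i \<in> borel_measurable lborel"
    by (rule borel_measurable_integrable[OF \<omega>i_int])
  define m where "m x = min 1 (max 0 (\<omega>i x))" for x
  have m_meas[measurable]: "m \<in> borel_measurable lborel"
    unfolding m_def by measurable
  have m_nn: "0 \<le> m x" "m x \<le> 1" for x by (auto simp: m_def)
  have m_int: "integrable lborel m"
  proof (rule Bochner_Integration.integrable_bound[OF \<omega>i_int m_meas])
    show "AE x in lborel. norm (m x) \<le> norm (\<omega>i x)"
      by (auto simp: m_def)
  qed
  define c0 where "c0 = integral\<^sup>L lborel m"
  have c0_pos: "c0 > 0"
  proof -
    have "c0 \<ge> 0" unfolding c0_def by (rule integral_nonneg_AE) (simp add: m_nn)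
    moreover have "c0 \<noteq> 0"
    proof
      assume "c0 = 0"
      then have "AE x in lborel. m x = 0"
        using integral_nonneg_eq_0_iff_AE[OF m_int] m_nn unfolding c0_def by simp
      then have "AE x in lborel. \<omega>i x = 0" using om_nonneg
      proof eventually_elim
        case (elim x)
        show ?case
        proof (cases "x \<in> {0..1}")
          case True
          then have "\<omega> x \<ge> 0" using elim by simp
          then have "\<omega>i x \<ge> 0" using True by (simp add: \<omega>i_def)
          moreover have "\<omega>i x \<le> 0" using elim(1) by (auto simp: m_def min_def max_def split: if_splits)
          ultimately show ?thesis by simp
        next
          case False
          then show ?thesis by (simp add: \<omega>i_def)
        qed
      qed
      then have "integral\<^sup>L lborel \<omega>i = 0" by (simp add: integral_eq_zero_AE)
      moreover have "(LBINT x:{0..1}. \<omega> x) = integral\<^sup>L lborel \<omega>i"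
        unfolding set_lebesgue_integral_def \<omega>i_def by simp
      ultimately show False using om_pos by simp
    qed
    ultimately show ?thesis by simp
  qed
  have good: "\<exists>N. negligible N \<and> N \<in> sets borel \<and> (\<forall>x\<in>{0..1} - N. (\<theta> lam has_real_derivative
           sqrt lam * ((cos (\<theta> lam x))\<^sup>2 + \<omega> x * (sin (\<theta> lam x))\<^sup>2)) (at x within {0..1}) \<and> \<omega> x \<ge> 0)"
    if lam: "lam \<ge> 0" for lam
  proof -
    have A1: "AE x in lborel. x \<in> {0..1} \<longrightarrow>
        (\<theta> lam has_real_derivative
           sqrt lam * ((cos (\<theta> lam x))\<^sup>2 + \<omega> x * (sin (\<theta> lam x))\<^sup>2)) (at x within {0..1})"
      using ode lam by blast
    have "AE x in lborel. x \<in> {0..1} \<longrightarrow>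
        (\<theta> lam has_real_derivative
           sqrt lam * ((cos (\<theta> lam x))\<^sup>2 + \<omega> x * (sin (\<theta> lam x))\<^sup>2)) (at x within {0..1}) \<and> \<omega> x \<ge> 0"
      using A1 om_nonneg by eventually_elim blast
    then obtain N where N: "{x \<in> space lborel. \<not> (x \<in> {0..1} \<longrightarrow>
        (\<theta> lam has_real_derivative
           sqrt lam * ((cos (\<theta> lam x))\<^sup>2 + \<omega> x * (sin (\<theta> lam x))\<^sup>2)) (at x within {0..1}) \<and> \<omega> x \<ge> 0)} \<subseteq> N"
      "emeasure lborel N = 0" "N \<in> sets lborel"
      by (rule AE_E)
    have "N \<in> null_sets lborel" using N(2,3) by (simp add: null_sets_def)
    then have "N \<in> null_sets lebesgue" by (rule null_sets_completionI)
    then have "negligible N" by (simp add: negligible_iff_null_sets)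
    moreover have "N \<in> sets borel" using N(3) by simp
    moreover have "\<forall>x\<in>{0..1} - N. (\<theta> lam has_real_derivative
           sqrt lam * ((cos (\<theta> lam x))\<^sup>2 + \<omega> x * (sin (\<theta> lam x))\<^sup>2)) (at x within {0..1}) \<and> \<omega> x \<ge> 0"
      using N(1) by auto
    ultimately show ?thesis by blast
  qed
  have mono: "\<forall>lam\<ge>0. mono_on {0..1} (\<theta> lam)"
  proof (intro allI impI)
    fix lam :: real assume lam: "lam \<ge> 0"
    obtain N where N: "negligible N" "\<forall>x\<in>{0..1} - N. (\<theta> lam has_real_derivative
           sqrt lam * ((cos (\<theta> lam x))\<^sup>2 + \<omega> x * (sin (\<theta> lam x))\<^sup>2)) (at x within {0..1}) \<and> \<omega> x \<ge> 0"
      using good[OF lam] by blast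
    show "mono_on {0..1} (\<theta> lam)"
    proof (rule ac_mono[OF ac[rule_format, OF lam] N(1)])
      fix x assume x: "x \<in> {0..1} - N"
      show "(\<theta> lam has_real_derivative
           sqrt lam * ((cos (\<theta> lam x))\<^sup>2 + \<omega> x * (sin (\<theta> lam x))\<^sup>2)) (at x within {0..1})"
        using N(2) x by blast
      have "\<omega> x \<ge> 0" using N(2) x by blast
      then show "0 \<le> sqrt lam * ((cos (\<theta> lam x))\<^sup>2 + \<omega> x * (sin (\<theta> lam x))\<^sup>2)"
        using lam by (intro mult_nonneg_nonneg add_nonneg_nonneg) auto
    qed
  qed
  have bound: "\<theta> lam 1 \<ge> sqrt lam * c0" if lam: "lam > 0" for lam
  proof -
    define f where "f = \<theta> lam"
    define D where "D x = sqrt lam * ((cos (f x))\<^sup>2 + \<omega> x * (sin (f x))\<^sup>2)" for x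
    obtain N where N: "negligible N" "N \<in> sets borel"
      "\<And>x. x \<in> {0..1} - N \<Longrightarrow> (f has_real_derivative D x) (at x within {0..1}) \<and> \<omega> x \<ge> 0"
      using good[of lam] lam unfolding D_def f_def by auto
    define S where "S = ({0..1} - N) \<inter> {x. 0 < m x}"
    have "{x \<in> space lborel. 0 < m x} \<in> sets lborel" by measurable
    then have "S \<in> sets lborel" unfolding S_def using N(2) by auto
    then have S_sets: "S \<in> sets lebesgue" by simp
    have Ssub: "S \<subseteq> {0..1}" by (auto simp: S_def)
    have Sx: "x \<in> {0..1}" "x \<notin> N" "0 < m x" if "x \<in> S" for x using that by (auto simp: S_def)
    have derS: "(f has_field_derivative D x) (at x within S)" if "x \<in> S" for x
      using N(3)[of x] Sx[OF that] has_field_derivative_subset[OF _ Ssub] by blast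
    have Dlow: "sqrt lam * m x \<le> D x" if "x \<in> S" for x
    proof -
      have x01: "x \<in> {0..1}" and w: "\<omega> x \<ge> 0" using N(3)[of x] Sx[OF that] by auto
      have "m x = min 1 (\<omega> x)" using x01 w by (simp add: m_def \<omega>i_def)
      also have "\<dots> \<le> (cos (f x))\<^sup>2 + \<omega> x * (sin (f x))\<^sup>2" by (rule key_ineq[OF w])
      finally show ?thesis unfolding D_def using lam by (intro mult_left_mono) auto
    qed
    have Dpos: "0 < D x" if "x \<in> S" for x
    proof -
      have "0 < sqrt lam * m x" using lam Sx(3)[OF that] by simp
      then show ?thesis using Dlow[OF that] by simp
    qed
    have monof: "mono_on {0..1} f" using mono lam unfolding f_def by simp
    have lessf: "f x < f y" if xy: "x \<in> S" "y \<in> S" "x < y" for x y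
    proof -
      obtain \<delta> where \<delta>: "\<delta> > 0" and inc: "\<And>h. h > 0 \<Longrightarrow> x + h \<in> {0..1} \<Longrightarrow> h < \<delta> \<Longrightarrow> f x < f (x + h)"
        using has_real_derivative_pos_inc_right[OF conjunct1[OF N(3)[of x]] Dpos[OF xy(1)]] Sx[OF xy(1)]
        by auto
      define h where "h = min (\<delta>/2) (y - x)"
      have h: "h > 0" "h < \<delta>" "x + h \<le> y" using \<delta> xy(3) by (auto simp: h_def)
      have xh: "x + h \<in> {0..1}" using h Sx[OF xy(1)] Sx[OF xy(2)] by auto
      have "f x < f (x + h)" using inc[OF h(1) xh h(2)] .
      also have "f (x + h) \<le> f y" using monof xh Sx[OF xy(2)] h(3) by (auto elim: mono_onD)
      finally show ?thesis .
    qed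
    have inj: "inj_on f S"
    proof (rule inj_onI)
      fix x y assume "x \<in> S" "y \<in> S" "f x = f y"
      then show "x = y" using lessf[of x y] lessf[of y x] by (cases x y rule: linorder_cases) auto
    qed
    have f01: "f 0 \<le> f 1" using monof by (auto elim: mono_onD)
    have fS: "f ` S \<subseteq> {f 0 .. f 1}"
    proof
      fix z assume "z \<in> f ` S"
      then obtain x where x: "x \<in> S" "z = f x" by blast
      then have "0 \<le> x" "x \<le> 1" using Ssub by auto
      then have "f 0 \<le> f x" "f x \<le> f 1" using monof by (auto elim: mono_onD)
      then show "z \<in> {f 0 .. f 1}" using x by simp
    qed
    have diff: "f differentiable_on S"
      unfolding differentiable_on_def
      using derS by (auto intro: differentiableI has_field_derivative_imp_has_derivative)
    have fSm: "f ` S \<in> lmeasurable"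
    proof (rule bounded_set_imp_lmeasurable)
      show "bounded (f ` S)" using fS bounded_subset[OF bounded_closed_interval] by blast
      show "f ` S \<in> sets lebesgue" by (rule differentiable_image_in_sets_lebesgue[OF S_sets _ diff]) simp
    qed
    have CoV: "(\<lambda>x. \<bar>D x\<bar> *\<^sub>R (1::real)) absolutely_integrable_on S \<and>
        integral S (\<lambda>x. \<bar>D x\<bar> *\<^sub>R (1::real)) = measure lebesgue (f ` S)"
      using has_absolute_integral_change_of_variables_real[OF S_sets derS inj, of "\<lambda>_. 1::real" "measure lebesgue (f ` S)"]
        fSm lmeasure_integral[OF fSm] by simp
    have absD: "(\<lambda>x. \<bar>D x\<bar>) integrable_on S" "integral S (\<lambda>x. \<bar>D x\<bar>) = measure lebesgue (f ` S)"
      using CoV by (auto simp: absolutely_integrable_on_def)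
    have mhas: "(m has_integral c0) UNIV" unfolding c0_def by (rule has_integral_integral_lborel[OF m_int])
    have mS_has: "((\<lambda>x. if x \<in> S then m x else 0) has_integral c0) UNIV"
    proof (rule has_integral_spike[OF N(1) _ mhas])
      fix x assume "x \<in> UNIV - N"
      then have xN: "x \<notin> N" by simp
      show "(if x \<in> S then m x else 0) = m x"
      proof (cases "x \<in> S")
        case False
        then have "x \<notin> {0..1} \<or> \<not> 0 < m x" using xN by (auto simp: S_def)
        then have "m x = 0"
        proof
          assume "x \<notin> {0..1}"
          then show "m x = 0" by (simp add: m_def \<omega>i_def)
        next
          assume "\<not> 0 < m x"
          then show "m x = 0" using m_nn[of x] by linarith
        qed
        then show ?thesis by simp
      qed simp
    qed
    have mS_int: "m integrable_on S" and mS: "integral S m = c0"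
      using mS_has integrable_restrict_UNIV[of S m] integral_restrict_UNIV[of S m]
      by (auto simp: has_integral_integrable_integral)
    have "sqrt lam * c0 = integral S (\<lambda>x. sqrt lam * m x)"
      using integral_mult[OF mS_int, of "sqrt lam"] mS by simp
    also have "\<dots> \<le> integral S (\<lambda>x. \<bar>D x\<bar>)"
    proof (rule integral_le)
      show "(\<lambda>x. sqrt lam * m x) integrable_on S" using mS_int lam by simp
      show "(\<lambda>x. \<bar>D x\<bar>) integrable_on S" by (rule absD(1))
      fix x assume "x \<in> S"
      then show "sqrt lam * m x \<le> \<bar>D x\<bar>" using Dlow by force
    qed
    also have "\<dots> = measure lebesgue (f ` S)" by (rule absD(2))
    also have "\<dots> \<le> measure lebesgue {f 0 .. f 1}"
      by (rule measure_mono_fmeasurable[OF fS]) (auto intro: fmeasurableD[OF fSm])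
    also have "\<dots> = f 1 - f 0" using f01 by simp
    also have "\<dots> \<le> f 1" using init lam prufer_init_nonneg[of c1 c2 lam] unfolding f_def by simp
    finally show ?thesis unfolding f_def .
  qed
  have lim: "filterlim (\<lambda>lam. \<theta> lam 1) at_top at_top"
  proof (rule filterlim_at_top_mono)
    show "filterlim (\<lambda>lam. c0 * sqrt lam) at_top at_top"
      by (rule filterlim_tendsto_pos_mult_at_top[OF tendsto_const c0_pos sqrt_at_top])
    show "eventually (\<lambda>lam. c0 * sqrt lam \<le> \<theta> lam 1) at_top"
      using eventually_gt_at_top[of 0] by eventually_elim (use bound in \<open>auto simp: mult.commute\<close>)
  qed
  show ?thesis using lim mono by blast
qed

end
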